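(* Let $R$ be an NJ-symmetric ring. Then $R/J(R)$ is reduced (has no nonzero nilpotent elements) if either (1) $R$ is semiperiodic, or (2) $R$ is left SF.
   Context: Rings are associative with identity. $N(R)$ is the set of nilpotent elements, $J(R)$ the Jacobson radical, $Z(R)$ the center. $R$ is NJ-symmetric if for all $a,b,c\in R$, $abc\in N(R)$ implies $bac\in J(R)$. $R$ is semiperiodic if for each $a\in R\setminus (J(R)\cup Z(R))$ there exist positive integers $p,q$ of opposite parity with $a^q-a^p\in N(R)$. $R$ is left SF if every simple left $R$-module is flat. *)

theory Defs
  imports Main
begin

definition nilpotents :: "'a::ring_1 set" where
  "nilpotents = {x. \<exists>n::nat. x ^ n = 0}"

definition ring_center :: "'a::ring_1 set" where
  "ring_center = {x. \<forall>y. x * y = y * x}"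

definition left_ideal :: "'a::ring_1 set \<Rightarrow> bool" where
  "left_ideal I \<longleftrightarrow> 0 \<in> I \<and> (\<forall>x\<in>I. \<forall>y\<in>I. x + y \<in> I) \<and> (\<forall>x\<in>I. - x \<in> I)
     \<and> (\<forall>r. \<forall>x\<in>I. r * x \<in> I)"

definition right_ideal :: "'a::ring_1 set \<Rightarrow> bool" where
  "right_ideal I \<longleftrightarrow> 0 \<in> I \<and> (\<forall>x\<in>I. \<forall>y\<in>I. x + y \<in> I) \<and> (\<forall>x\<in>I. - x \<in> I)
     \<and> (\<forall>r. \<forall>x\<in>I. x * r \<in> I)"

definition maximal_left_ideal :: "'a::ring_1 set \<Rightarrow> bool" where
  "maximal_left_ideal I \<longleftrightarrow> left_ideal I \<and> I \<noteq> UNIV \<and>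
     (\<forall>K. left_ideal K \<and> I \<subseteq> K \<and> K \<noteq> UNIV \<longrightarrow> K = I)"

definition jacobson :: "'a::ring_1 set" where
  "jacobson = \<Inter> {I. maximal_left_ideal I}"

definition NJ_symmetric :: "'a::ring_1 itself \<Rightarrow> bool" where
  "NJ_symmetric _ \<longleftrightarrow> (\<forall>a b c::'a. a * b * c \<in> nilpotents \<longrightarrow> b * a * c \<in> jacobson)"

definition semiperiodic :: "'a::ring_1 itself \<Rightarrow> bool" where
  "semiperiodic _ \<longleftrightarrow> (\<forall>a::'a. a \<notin> jacobson \<union> ring_center \<longrightarrow>
     (\<exists>p q::nat. p > 0 \<and> q > 0 \<and> odd (p + q) \<and> a ^ q - a ^ p \<in> nilpotents))"

text \<open>R/J(R) is reduced: every element whose image in R/J(R) is nilpotent lies in J(R).\<close>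
definition quotient_jacobson_reduced :: "'a::ring_1 itself \<Rightarrow> bool" where
  "quotient_jacobson_reduced _ \<longleftrightarrow> (\<forall>a::'a. (\<exists>n::nat. a ^ n \<in> jacobson) \<longrightarrow> a \<in> jacobson)"

definition left_module ::
  "'b set \<Rightarrow> ('b \<Rightarrow> 'b \<Rightarrow> 'b) \<Rightarrow> 'b \<Rightarrow> ('a::ring_1 \<Rightarrow> 'b \<Rightarrow> 'b) \<Rightarrow> bool" where
  "left_module M add z sm \<longleftrightarrow>
     z \<in> M \<and> (\<forall>x\<in>M. \<forall>y\<in>M. add x y \<in> M) \<and> (\<forall>r. \<forall>x\<in>M. sm r x \<in> M)
     \<and> (\<forall>x\<in>M. \<forall>y\<in>M. \<forall>w\<in>M. add (add x y) w = add x (add y w))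
     \<and> (\<forall>x\<in>M. \<forall>y\<in>M. add x y = add y x)
     \<and> (\<forall>x\<in>M. add z x = x)
     \<and> (\<forall>x\<in>M. \<exists>y\<in>M. add x y = z)
     \<and> (\<forall>r. \<forall>x\<in>M. \<forall>y\<in>M. sm r (add x y) = add (sm r x) (sm r y))
     \<and> (\<forall>r s. \<forall>x\<in>M. sm (r + s) x = add (sm r x) (sm s x))
     \<and> (\<forall>r s. \<forall>x\<in>M. sm (r * s) x = sm r (sm s x))
     \<and> (\<forall>x\<in>M. sm 1 x = x)"

definition submodule ::
  "'b set \<Rightarrow> 'b set \<Rightarrow> ('b \<Rightarrow> 'b \<Rightarrow> 'b) \<Rightarrow> 'b \<Rightarrow> ('a::ring_1 \<Rightarrow> 'b \<Rightarrow> 'b) \<Rightarrow> bool" where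
  "submodule N M add z sm \<longleftrightarrow> N \<subseteq> M \<and> z \<in> N \<and> (\<forall>x\<in>N. \<forall>y\<in>N. add x y \<in> N)
     \<and> (\<forall>r. \<forall>x\<in>N. sm r x \<in> N)"

definition simple_left_module ::
  "'b set \<Rightarrow> ('b \<Rightarrow> 'b \<Rightarrow> 'b) \<Rightarrow> 'b \<Rightarrow> ('a::ring_1 \<Rightarrow> 'b \<Rightarrow> 'b) \<Rightarrow> bool" where
  "simple_left_module M add z sm \<longleftrightarrow> left_module M add z sm \<and> M \<noteq> {z} \<and>
     (\<forall>N. submodule N M add z sm \<longrightarrow> N = {z} \<or> N = M)"

text \<open>Tensor product I \<otimes>_R M of a right ideal I with a left module M, presented as the free
  abelian group on I \<times> M (finitely supported integer functions) modulo the subgroup generated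
  by the bilinearity and balancing relations.\<close>
definition tgen :: "'a \<times> 'b \<Rightarrow> 'a \<times> 'b \<Rightarrow> int" where
  "tgen x = (\<lambda>p. if p = x then 1 else 0)"

inductive_set tensor_rel ::
  "'a::ring_1 set \<Rightarrow> 'b set \<Rightarrow> ('b \<Rightarrow> 'b \<Rightarrow> 'b) \<Rightarrow> ('a \<Rightarrow> 'b \<Rightarrow> 'b) \<Rightarrow> ('a \<times> 'b \<Rightarrow> int) set"
  for I M add sm where
  zero: "(\<lambda>_. 0) \<in> tensor_rel I M add sm"
| add_left: "\<lbrakk>i \<in> I; i' \<in> I; m \<in> M\<rbrakk> \<Longrightarrow>
     (\<lambda>p. tgen (i + i', m) p - tgen (i, m) p - tgen (i', m) p) \<in> tensor_rel I M add sm"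
| add_right: "\<lbrakk>i \<in> I; m \<in> M; m' \<in> M\<rbrakk> \<Longrightarrow>
     (\<lambda>p. tgen (i, add m m') p - tgen (i, m) p - tgen (i, m') p) \<in> tensor_rel I M add sm"
| balance: "\<lbrakk>i \<in> I; m \<in> M\<rbrakk> \<Longrightarrow>
     (\<lambda>p. tgen (i * r, m) p - tgen (i, sm r m) p) \<in> tensor_rel I M add sm"
| plus: "\<lbrakk>f \<in> tensor_rel I M add sm; g \<in> tensor_rel I M add sm\<rbrakk> \<Longrightarrow>
     (\<lambda>p. f p + g p) \<in> tensor_rel I M add sm"
| neg: "f \<in> tensor_rel I M add sm \<Longrightarrow> (\<lambda>p. - f p) \<in> tensor_rel I M add sm"

text \<open>Flatness of a left module via the standard ideal criterion: for every right ideal I the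
  natural map I \<otimes>_R M \<rightarrow> M, i \<otimes> m \<mapsto> i m, is injective. Every element of
  I \<otimes>_R M is a finite sum of simple tensors (given as a list xs), and it is zero iff its
  formal sum lies in tensor_rel.\<close>
definition flat_left_module ::
  "'b set \<Rightarrow> ('b \<Rightarrow> 'b \<Rightarrow> 'b) \<Rightarrow> 'b \<Rightarrow> ('a::ring_1 \<Rightarrow> 'b \<Rightarrow> 'b) \<Rightarrow> bool" where
  "flat_left_module M add z sm \<longleftrightarrow>
     (\<forall>I xs. right_ideal I \<and> set xs \<subseteq> I \<times> M \<and>
        foldr (\<lambda>(i, m) acc. add (sm i m) acc) xs z = z
        \<longrightarrow> (\<lambda>p. int (count_list xs p)) \<in> tensor_rel I M add sm)"

text \<open>Every simple left R-module is cyclic,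
  hence of cardinality at most |R|, so it is isomorphic to one whose carrier is a subset
  of the ring's own type; quantifying over such modules loses no generality.\<close>
definition left_SF :: "'a::ring_1 itself \<Rightarrow> bool" where
  "left_SF _ \<longleftrightarrow> (\<forall>(M::'a set) add z (sm::'a \<Rightarrow> 'a \<Rightarrow> 'a).
     simple_left_module M add z sm \<longrightarrow> flat_left_module M add z sm)"

end

theory Submission
  imports Defs
begin


lemma li_closed:
  assumes "left_ideal I"
  shows "0 \<in> I" "x \<in> I \<Longrightarrow> y \<in> I \<Longrightarrow> x + y \<in> I" "x \<in> I \<Longrightarrow> - x \<in> I"
    "x \<in> I \<Longrightarrow> r * x \<in> I" "x \<in> I \<Longrightarrow> y \<in> I \<Longrightarrow> x - y \<in> I"
proof -
  have d: "0 \<in> I" "\<forall>x\<in>I. \<forall>y\<in>I. x + y \<in> I" "\<forall>x\<in>I. - x \<in> I" "\<forall>r. \<forall>x\<in>I. r * x \<in> I"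
    using assms unfolding left_ideal_def by blast+
  show "0 \<in> I" by (fact d(1))
  show "x \<in> I \<Longrightarrow> y \<in> I \<Longrightarrow> x + y \<in> I" using d(2) by blast
  show "x \<in> I \<Longrightarrow> - x \<in> I" using d(3) by blast
  show "x \<in> I \<Longrightarrow> r * x \<in> I" using d(4) by blast
  show "x \<in> I \<Longrightarrow> y \<in> I \<Longrightarrow> x - y \<in> I"
    using d(2,3) by (metis diff_conv_add_uminus)
qed

lemma li_one: "left_ideal I \<Longrightarrow> 1 \<in> I \<Longrightarrow> I = UNIV"
  using li_closed(4)[of I 1] by auto

lemma max_li: "maximal_left_ideal M \<Longrightarrow> left_ideal M" "maximal_left_ideal M \<Longrightarrow> 1 \<notin> M"
  unfolding maximal_left_ideal_def using li_one by blast+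

lemma J_sub: "maximal_left_ideal M \<Longrightarrow> jacobson \<subseteq> M"
  unfolding jacobson_def by auto

lemma J_intro: "(\<And>M. maximal_left_ideal M \<Longrightarrow> x \<in> M) \<Longrightarrow> x \<in> jacobson"
  unfolding jacobson_def by auto

lemma J_left: assumes "(x::'a::ring_1) \<in> jacobson" shows "r * x \<in> jacobson"
proof (rule J_intro)
  fix M :: "'a set" assume "maximal_left_ideal M"
  then have "x \<in> M" "left_ideal M" using J_sub max_li(1) assms by blast+
  then show "r * x \<in> M" by (rule li_closed(4)[rotated])
qed

lemma J_sub_closed: assumes "(x::'a::ring_1) \<in> jacobson" "y \<in> jacobson" shows "x - y \<in> jacobson"
proof (rule J_intro)
  fix M :: "'a set" assume "maximal_left_ideal M"
  then have "x \<in> M" "y \<in> M" "left_ideal M" using J_sub max_li(1) assms by blast+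
  then show "x - y \<in> M" using li_closed(5) by blast
qed

lemma gen_ideal:
  assumes "maximal_left_ideal M" "y \<notin> M"
  shows "\<exists>m s. m \<in> M \<and> 1 = m + s * y"
proof -
  have L: "left_ideal M" using assms max_li by auto
  define K where "K = {m + s * y | m s. m \<in> M}"
  have "left_ideal K"
    unfolding left_ideal_def K_def
  proof (intro conjI ballI allI)
    have "(0::'a) = 0 + 0 * y" by simp
    then show "0 \<in> {m + s * y |m s. m \<in> M}" using li_closed(1)[OF L] by blast
  next
    fix x z assume "x \<in> {m + s * y |m s. m \<in> M}" "z \<in> {m + s * y |m s. m \<in> M}"
    then obtain m1 s1 m2 s2 where "x = m1 + s1*y" "z = m2 + s2*y" "m1 \<in> M" "m2 \<in> M" by auto
    then have "x + z = (m1+m2) + (s1+s2)*y" "m1 + m2 \<in> M" by (auto simp: algebra_simps li_closed(2)[OF L])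
    then show "x + z \<in> {m + s * y |m s. m \<in> M}" by blast
  next
    fix x assume "x \<in> {m + s * y |m s. m \<in> M}"
    then obtain m1 s1 where "x = m1 + s1*y" "m1 \<in> M" by auto
    then have "- x = (-m1) + (-s1)*y" "-m1 \<in> M" by (auto simp: algebra_simps li_closed(3)[OF L])
    then show "- x \<in> {m + s * y |m s. m \<in> M}" by blast
  next
    fix r x assume "x \<in> {m + s * y |m s. m \<in> M}"
    then obtain m1 s1 where "x = m1 + s1*y" "m1 \<in> M" by auto
    then have "r * x = (r*m1) + (r*s1)*y" "r*m1 \<in> M" by (auto simp: algebra_simps li_closed(4)[OF L])
    then show "r * x \<in> {m + s * y |m s. m \<in> M}" by blast
  qed
  moreover have "M \<subseteq> K" unfolding K_def
  proof
    fix x assume "x \<in> M"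
    moreover have "x = x + 0 * y" by simp
    ultimately show "x \<in> {m + s * y |m s. m \<in> M}" by blast
  qed
  moreover have "y \<in> K" unfolding K_def
  proof -
    have "y = 0 + 1 * y" by simp
    then show "y \<in> {m + s * y |m s. m \<in> M}" using li_closed(1)[OF L] by blast
  qed
  ultimately have "K = UNIV"
  proof -
    assume a: "left_ideal K" "M \<subseteq> K" "y \<in> K"
    have "\<forall>K. left_ideal K \<and> M \<subseteq> K \<and> K \<noteq> UNIV \<longrightarrow> K = M"
      using assms(1) unfolding maximal_left_ideal_def by simp
    then show "K = UNIV" using a assms(2) by metis
  qed
  then have "1 \<in> K" by simp
  then show ?thesis unfolding K_def by blast
qed

lemma reduce:
  assumes "\<And>b::'a::ring_1. b * b \<in> jacobson \<Longrightarrow> b \<in> jacobson"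
  shows "quotient_jacobson_reduced TYPE('a)"
proof -
  have "\<forall>a::'a. a ^ n \<in> jacobson \<longrightarrow> a \<in> jacobson" for n
  proof (induction n)
    case 0
    show ?case
    proof (intro allI impI)
      fix a :: 'a assume "a ^ 0 \<in> jacobson"
      then show "a \<in> jacobson" using J_left[of 1 a] by simp
    qed
  next
    case (Suc n)
    show ?case
    proof (intro allI impI)
      fix a :: 'a assume h: "a ^ Suc n \<in> jacobson"
      show "a \<in> jacobson"
      proof (cases n)
        case 0 then show ?thesis using h by simp
      next
        case (Suc k)
        have "a ^ n * a ^ n = a ^ k * a ^ Suc n"
        proof -
          have "n + n = k + Suc n" using Suc by simp
          then show ?thesis by (metis power_add)
        qed
        then have "a ^ n * a ^ n \<in> jacobson" using J_left[OF h] by simp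
        then have "a ^ n \<in> jacobson" by (rule assms)
        then show ?thesis using Suc.IH by blast
      qed
    qed
  qed
  then show ?thesis unfolding quotient_jacobson_reduced_def by blast
qed

lemma N_sub_J:
  assumes "NJ_symmetric TYPE('a::ring_1)" "(x::'a) \<in> nilpotents"
  shows "x \<in> jacobson"
proof -
  have "1 * x * 1 \<in> nilpotents \<longrightarrow> x * 1 * 1 \<in> jacobson"
    using assms(1) unfolding NJ_symmetric_def by blast
  then show ?thesis using assms(2) by simp
qed



lemma comm_pow: assumes "(x::'a::ring_1) * y = y * x" shows "(x * y) ^ k = x ^ k * y ^ k"
proof (induction k)
  case 0 then show ?case by simp
next
  case (Suc k)
  have c: "y * x ^ k = x ^ k * y" using power_commuting_commutes[OF assms] by simp
  have "(x * y) ^ Suc k = x * y * (x ^ k * y ^ k)" using Suc by simp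
  also have "\<dots> = x * (y * x ^ k) * y ^ k" by (simp add: mult.assoc)
  also have "\<dots> = x ^ Suc k * y ^ Suc k" by (simp add: c mult.assoc)
  finally show ?case .
qed

lemma comm_pow2: assumes "(x::'a::ring_1) * y = y * x" shows "x ^ m * y ^ n = y ^ n * x ^ m"
proof -
  have "x ^ m * y = y * x ^ m" by (rule power_commuting_commutes[OF assms])
  then have "y * x ^ m = x ^ m * y" by simp
  then have "y ^ n * x ^ m = x ^ m * y ^ n" by (rule power_commuting_commutes)
  then show ?thesis by simp
qed

lemma inv_pow: assumes "(v::'a::ring_1) * w = 1" shows "v ^ k * w ^ k = 1"
proof (induction k)
  case 0 then show ?case by simp
next
  case (Suc k)
  have "v ^ Suc k * w ^ Suc k = v ^ k * (v * w) * w ^ k"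
    by (simp only: power_Suc2[of v] power_Suc[of w] mult.assoc)
  then show ?case using Suc assms by simp
qed

lemma central_case:
  assumes "(b::'a::ring_1) \<in> ring_center" "b * b \<in> jacobson"
  shows "b \<in> jacobson"
proof (rule J_intro)
  fix M :: "'a set" assume M: "maximal_left_ideal M"
  have L: "left_ideal M" using M max_li by auto
  show "b \<in> M"
  proof (rule ccontr)
    assume "b \<notin> M"
    then obtain m s where ms: "m \<in> M" "1 = m + s * b" using gen_ideal[OF M] by blast
    have bs: "b * s = s * b" using assms(1) unfolding ring_center_def by auto
    have m: "m = 1 - s * b" using ms(2) by (simp add: algebra_simps)
    have "(1 + s * b) * m = 1 - s * (b * s) * b" unfolding m by (simp add: algebra_simps)
    also have "\<dots> = 1 - (s * s) * (b * b)" unfolding bs by (simp add: mult.assoc)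
    finally have e: "(1 + s * b) * m = 1 - (s * s) * (b * b)" .
    have "(1 + s * b) * m \<in> M" using li_closed(4)[OF L ms(1)] .
    moreover have "(s * s) * (b * b) \<in> M" using J_left[OF assms(2)] J_sub[OF M] by blast
    ultimately have "(1 - (s * s) * (b * b)) + (s * s) * (b * b) \<in> M"
      using e li_closed(2)[OF L] by metis
    then have "1 \<in> M" by simp
    then show False using max_li(2)[OF M] by simp
  qed
qed

lemma left_inv:
  assumes "(j::'a::ring_1) \<in> jacobson"
  shows "\<exists>u. u * (1 - j) = 1"
proof (rule ccontr)
  assume no: "\<not> (\<exists>u. u * (1 - j) = 1)"
  define L0 where "L0 = range (\<lambda>r. r * (1 - j))"
  define A where "A = {L. left_ideal L \<and> L0 \<subseteq> L \<and> (1::'a) \<notin> L}"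
  have L0A: "L0 \<in> A"
    unfolding A_def
  proof (intro CollectI conjI)
    show "left_ideal L0" unfolding left_ideal_def L0_def
    proof (intro conjI ballI allI)
      show "0 \<in> range (\<lambda>r. r * (1 - j))" by (rule range_eqI[where x=0]) simp
    next
      fix x y assume "x \<in> range (\<lambda>r. r * (1 - j))" "y \<in> range (\<lambda>r. r * (1 - j))"
      then obtain r1 r2 where "x = r1 * (1 - j)" "y = r2 * (1 - j)" by auto
      then show "x + y \<in> range (\<lambda>r. r * (1 - j))" by (intro range_eqI[where x="r1 + r2"]) (simp add: distrib_right)
    next
      fix x assume "x \<in> range (\<lambda>r. r * (1 - j))"
      then obtain r1 where "x = r1 * (1 - j)" by auto
      then show "- x \<in> range (\<lambda>r. r * (1 - j))" by (intro range_eqI[where x="- r1"]) (simp add: algebra_simps)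
    next
      fix t x assume "x \<in> range (\<lambda>r. r * (1 - j))"
      then obtain r1 where "x = r1 * (1 - j)" by auto
      then show "t * x \<in> range (\<lambda>r. r * (1 - j))" by (intro range_eqI[where x="t * r1"]) (simp add: mult.assoc)
    qed
    show "L0 \<subseteq> L0" by simp
    show "1 \<notin> L0" using no unfolding L0_def by auto
  qed
  have "\<exists>M\<in>A. \<forall>X\<in>A. M \<subseteq> X \<longrightarrow> X = M"
  proof (rule subset_Zorn_nonempty)
    show "A \<noteq> {}" using L0A by auto
  next
    fix C assume ne: "C \<noteq> {}" and ch: "subset.chain A C"
    have CA: "C \<subseteq> A" and tot: "\<forall>X\<in>C. \<forall>Y\<in>C. X \<subseteq> Y \<or> Y \<subseteq> X"
      using ch unfolding subset_chain_def by auto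
    have li: "\<And>X. X \<in> C \<Longrightarrow> left_ideal X" using CA unfolding A_def by auto
    obtain X0 where X0: "X0 \<in> C" using ne by auto
    show "\<Union>C \<in> A" unfolding A_def
    proof (intro CollectI conjI)
      show "left_ideal (\<Union>C)" unfolding left_ideal_def
      proof (intro conjI ballI allI)
        show "0 \<in> \<Union>C" using li_closed(1)[OF li[OF X0]] X0 by auto
      next
        fix x y assume "x \<in> \<Union>C" "y \<in> \<Union>C"
        then obtain X Y where XY: "X \<in> C" "Y \<in> C" "x \<in> X" "y \<in> Y" by auto
        show "x + y \<in> \<Union>C"
        proof (cases "X \<subseteq> Y")
          case True
          then show ?thesis using XY li_closed(2)[OF li[OF XY(2)]] by blast
        next
          case False
          then have "Y \<subseteq> X" using tot XY by blast
          then show ?thesis using XY li_closed(2)[OF li[OF XY(1)]] by blast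
        qed
      next
        fix x assume "x \<in> \<Union>C"
        then obtain X where "X \<in> C" "x \<in> X" by auto
        then show "- x \<in> \<Union>C" using li_closed(3)[OF li] by blast
      next
        fix r x assume "x \<in> \<Union>C"
        then obtain X where "X \<in> C" "x \<in> X" by auto
        then show "r * x \<in> \<Union>C" using li_closed(4)[OF li] by blast
      qed
      show "L0 \<subseteq> \<Union>C" using X0 CA unfolding A_def by auto
      show "1 \<notin> \<Union>C" using CA unfolding A_def by auto
    qed
  qed
  then obtain M where MA: "M \<in> A" and Mmax: "\<forall>X\<in>A. M \<subseteq> X \<longrightarrow> X = M" by blast
  have Mli: "left_ideal M" and M0: "L0 \<subseteq> M" and M1: "1 \<notin> M" using MA unfolding A_def by auto
  have "maximal_left_ideal M"
    unfolding maximal_left_ideal_def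
  proof (intro conjI allI impI)
    show "left_ideal M" by (fact Mli)
    show "M \<noteq> UNIV" using M1 by auto
    fix K assume K: "left_ideal K \<and> M \<subseteq> K \<and> K \<noteq> UNIV"
    then have "1 \<notin> K" using li_one by blast
    then have "K \<in> A" using K M0 unfolding A_def by auto
    then show "K = M" using Mmax K by blast
  qed
  then have "j \<in> M" using J_sub assms by blast
  moreover have "1 - j \<in> M" using M0 unfolding L0_def by (metis mult_1 rangeI subsetD)
  ultimately have "(1 - j) + j \<in> M" using li_closed(2)[OF Mli] by blast
  then show False using M1 by simp
qed

lemma nc_case:
  assumes NJ: "NJ_symmetric TYPE('a::ring_1)" and bb: "(b::'a) * b \<in> jacobson"
    and pq: "0 < p" "p < q" and nil: "b ^ q - b ^ p \<in> nilpotents"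
  shows "b \<in> jacobson"
proof -
  define d where "d = q - p"
  have d1: "d \<ge> 1" "q = p + d" using pq unfolding d_def by auto
  define w where "w = 1 - b ^ d"
  obtain k where k: "(b ^ q - b ^ p) ^ k = 0" using nil unfolding nilpotents_def by auto
  have pd: "b ^ d * b ^ p = b ^ p * b ^ d" unfolding power_add[symmetric] by (simp add: add.commute)
  have bw: "b ^ p * w = - (b ^ q - b ^ p)"
    unfolding w_def d1(2) power_add by (simp add: right_diff_distrib)
  have cw: "b ^ p * w = w * b ^ p"
    unfolding w_def by (simp add: algebra_simps pd)
  have "(b ^ p * w) ^ k = 0" unfolding bw power_minus[of "b ^ q - b ^ p"] k by simp
  then have z: "b ^ (p * k) * w ^ k = 0" using comm_pow[OF cw] by (simp add: power_mult)
  have "b ^ d * b ^ d = b ^ (d + d - 2) * (b * b)"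
  proof -
    have "d + d = (d + d - 2) + 2" using d1 by simp
    then have "b ^ d * b ^ d = b ^ (d + d - 2) * b ^ 2" by (metis power_add)
    then show ?thesis by (simp add: power2_eq_square)
  qed
  then have "b ^ d * b ^ d \<in> jacobson" using J_left[OF bb] by simp
  then obtain u where u: "u * (1 - b ^ d * b ^ d) = 1" using left_inv by blast
  have "1 - b ^ d * b ^ d = (1 + b ^ d) * w" unfolding w_def by (simp add: algebra_simps)
  then have vw: "(u * (1 + b ^ d)) * w = 1" using u by (simp add: mult.assoc)
  have cbw: "b * w = w * b" unfolding w_def by (simp add: algebra_simps power_commutes)
  have "b ^ (p * k) = (u * (1 + b ^ d)) ^ k * w ^ k * b ^ (p * k)"
    using inv_pow[OF vw] by simp
  also have "\<dots> = (u * (1 + b ^ d)) ^ k * (b ^ (p * k) * w ^ k)"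
    using comm_pow2[OF cbw, of "p * k" k] by (simp add: mult.assoc)
  also have "\<dots> = 0" using z by simp
  finally have "b \<in> nilpotents" unfolding nilpotents_def by blast
  then show ?thesis using N_sub_J[OF NJ] by blast
qed

lemma semi_case:
  assumes NJ: "NJ_symmetric TYPE('a::ring_1)" and sp: "semiperiodic TYPE('a)"
    and bb: "(b::'a) * b \<in> jacobson"
  shows "b \<in> jacobson"
proof (cases "b \<in> jacobson \<union> ring_center")
  case True
  then show ?thesis using central_case[OF _ bb] by blast
next
  case False
  then obtain p q :: nat where pq: "p > 0" "q > 0" "odd (p + q)" "b ^ q - b ^ p \<in> nilpotents"
    using sp unfolding semiperiodic_def by blast
  have "p \<noteq> q" using pq(3) by auto
  then show ?thesis
  proof (cases "p < q")
    case True
    then show ?thesis using nc_case[OF NJ bb pq(1) True pq(4)] by simp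
  next
    case False
    then have "q < p" using \<open>p \<noteq> q\<close> by simp
    obtain k where "(b ^ q - b ^ p) ^ k = 0" using pq(4) unfolding nilpotents_def by auto
    then have "(b ^ p - b ^ q) ^ k = 0"
      using power_minus[of "b ^ q - b ^ p" k] by simp
    then have "b ^ p - b ^ q \<in> nilpotents" unfolding nilpotents_def by blast
    then show ?thesis using nc_case[OF NJ bb pq(2) \<open>q < p\<close>] by simp
  qed
qed



lemma sum_tgen:
  assumes "finite T" "x \<in> T"
  shows "(\<Sum>p\<in>T. of_int (tgen x p) * g p) = (g x :: 'c::ring_1)"
proof -
  have "(\<Sum>p\<in>T. of_int (tgen x p) * g p) = (\<Sum>p\<in>T. if p = x then g x else 0)"
    by (rule sum.cong) (auto simp: tgen_def)
  also have "\<dots> = g x" using assms by (simp add: sum.delta')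
  finally show ?thesis .
qed

lemma sum_ext:
  assumes "finite T" "S \<subseteq> T" "{p. f p \<noteq> 0} \<subseteq> S"
  shows "(\<Sum>p\<in>S. of_int (f p) * g p) = (\<Sum>p\<in>T. of_int (f p) * (g p :: 'c::ring_1))"
proof (rule sum.mono_neutral_left)
  have z: "f i = 0" if "i \<notin> S" for i using assms(3) that by blast
  show "\<forall>i\<in>T - S. of_int (f i) * g i = 0" using z by simp
qed (use assms in auto)

lemma supp_tgen: "{p. tgen x p \<noteq> 0} = {x}"
  by (auto simp: tgen_def)

lemma tensor_inv:
  fixes B :: "'a::ring_1 set" and C :: "'a set"
  assumes f: "f \<in> tensor_rel I C add sm"
    and B0: "0 \<in> B" and Badd: "\<And>x y. x \<in> B \<Longrightarrow> y \<in> B \<Longrightarrow> x + y \<in> B"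
    and Bneg: "\<And>x. x \<in> B \<Longrightarrow> - x \<in> B"
    and hr: "\<And>i m m'. i \<in> I \<Longrightarrow> m \<in> C \<Longrightarrow> m' \<in> C \<Longrightarrow> i * add m m' - i * m - i * m' \<in> B"
    and hb: "\<And>i m r. i \<in> I \<Longrightarrow> m \<in> C \<Longrightarrow> (i * r) * m - i * sm r m \<in> B"
  shows "finite {p. f p \<noteq> 0} \<and> (\<forall>S. finite S \<longrightarrow> {p. f p \<noteq> 0} \<subseteq> S \<longrightarrow>
           (\<Sum>p\<in>S. of_int (f p) * (fst p * snd p)) \<in> B)"
  using f
proof (induction rule: tensor_rel.induct)
  case zero
  then show ?case using B0 by simp
next
  case (add_left i i' m)
  let ?f = "\<lambda>p. tgen (i + i', m) p - tgen (i, m) p - tgen (i', m) p"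
  have supp: "{p. ?f p \<noteq> 0} \<subseteq> {(i + i', m), (i, m), (i', m)}" by (auto simp: tgen_def)
  show ?case
  proof (intro conjI allI impI)
    show "finite {p. ?f p \<noteq> 0}" using supp finite_subset by blast
    fix S :: "('a \<times> 'a) set" assume S: "finite S" "{p. ?f p \<noteq> 0} \<subseteq> S"
    let ?T = "S \<union> {(i + i', m), (i, m), (i', m)}"
    have "(\<Sum>p\<in>S. of_int (?f p) * (fst p * snd p)) = (\<Sum>p\<in>?T. of_int (?f p) * (fst p * snd p))"
      by (rule sum_ext[of _ S]) (use S in auto)
    also have "\<dots> = (\<Sum>p\<in>?T. of_int (tgen (i + i', m) p) * (fst p * snd p))
        - (\<Sum>p\<in>?T. of_int (tgen (i, m) p) * (fst p * snd p))
        - (\<Sum>p\<in>?T. of_int (tgen (i', m) p) * (fst p * snd p))"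
      by (simp add: left_diff_distrib sum_subtractf)
    also have "\<dots> = (i + i') * m - i * m - i' * m"
      using S by (simp add: sum_tgen)
    also have "\<dots> = 0" by (simp add: algebra_simps)
    finally show "(\<Sum>p\<in>S. of_int (?f p) * (fst p * snd p)) \<in> B" using B0 by simp
  qed
next
  case (add_right i m m')
  let ?f = "\<lambda>p. tgen (i, add m m') p - tgen (i, m) p - tgen (i, m') p"
  have supp: "{p. ?f p \<noteq> 0} \<subseteq> {(i, add m m'), (i, m), (i, m')}" by (auto simp: tgen_def)
  show ?case
  proof (intro conjI allI impI)
    show "finite {p. ?f p \<noteq> 0}" using supp finite_subset by blast
    fix S :: "('a \<times> 'a) set" assume S: "finite S" "{p. ?f p \<noteq> 0} \<subseteq> S"
    let ?T = "S \<union> {(i, add m m'), (i, m), (i, m')}"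
    have "(\<Sum>p\<in>S. of_int (?f p) * (fst p * snd p)) = (\<Sum>p\<in>?T. of_int (?f p) * (fst p * snd p))"
      by (rule sum_ext[of _ S]) (use S in auto)
    also have "\<dots> = (\<Sum>p\<in>?T. of_int (tgen (i, add m m') p) * (fst p * snd p))
        - (\<Sum>p\<in>?T. of_int (tgen (i, m) p) * (fst p * snd p))
        - (\<Sum>p\<in>?T. of_int (tgen (i, m') p) * (fst p * snd p))"
      by (simp add: left_diff_distrib sum_subtractf)
    also have "\<dots> = i * add m m' - i * m - i * m'"
      using S by (simp add: sum_tgen)
    finally show "(\<Sum>p\<in>S. of_int (?f p) * (fst p * snd p)) \<in> B" using hr add_right by simp
  qed
next
  case (balance i m r)
  let ?f = "\<lambda>p. tgen (i * r, m) p - tgen (i, sm r m) p"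
  have supp: "{p. ?f p \<noteq> 0} \<subseteq> {(i * r, m), (i, sm r m)}" by (auto simp: tgen_def)
  show ?case
  proof (intro conjI allI impI)
    show "finite {p. ?f p \<noteq> 0}" using supp finite_subset by blast
    fix S :: "('a \<times> 'a) set" assume S: "finite S" "{p. ?f p \<noteq> 0} \<subseteq> S"
    let ?T = "S \<union> {(i * r, m), (i, sm r m)}"
    have "(\<Sum>p\<in>S. of_int (?f p) * (fst p * snd p)) = (\<Sum>p\<in>?T. of_int (?f p) * (fst p * snd p))"
      by (rule sum_ext[of _ S]) (use S in auto)
    also have "\<dots> = (\<Sum>p\<in>?T. of_int (tgen (i * r, m) p) * (fst p * snd p))
        - (\<Sum>p\<in>?T. of_int (tgen (i, sm r m) p) * (fst p * snd p))"
      by (simp add: left_diff_distrib sum_subtractf)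
    also have "\<dots> = (i * r) * m - i * sm r m"
      using S by (simp add: sum_tgen)
    finally show "(\<Sum>p\<in>S. of_int (?f p) * (fst p * snd p)) \<in> B" using hb balance by simp
  qed
next
  case (plus f g)
  show ?case
  proof (intro conjI allI impI)
    have "{p. f p + g p \<noteq> 0} \<subseteq> {p. f p \<noteq> 0} \<union> {p. g p \<noteq> 0}" by auto
    then show "finite {p. f p + g p \<noteq> 0}" using plus.IH finite_subset by blast
    fix S :: "('a \<times> 'a) set" assume S: "finite S" "{p. f p + g p \<noteq> 0} \<subseteq> S"
    let ?T = "S \<union> {p. f p \<noteq> 0} \<union> {p. g p \<noteq> 0}"
    have fT: "finite ?T" using S plus.IH by auto
    have "(\<Sum>p\<in>S. of_int (f p + g p) * (fst p * snd p)) = (\<Sum>p\<in>?T. of_int (f p + g p) * (fst p * snd p))"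
      by (rule sum_ext[OF fT, of S "\<lambda>p. f p + g p"]) (use S in auto)
    also have "\<dots> = (\<Sum>p\<in>?T. of_int (f p) * (fst p * snd p)) + (\<Sum>p\<in>?T. of_int (g p) * (fst p * snd p))"
      by (simp add: distrib_right sum.distrib)
    moreover have "(\<Sum>p\<in>?T. of_int (f p) * (fst p * snd p)) \<in> B"
    proof -
      have h: "\<And>S. finite S \<Longrightarrow> {p. f p \<noteq> 0} \<subseteq> S \<Longrightarrow> (\<Sum>p\<in>S. of_int (f p) * (fst p * snd p)) \<in> B"
        using plus.IH(1) by blast
      show ?thesis by (rule h[OF fT]) auto
    qed
    moreover have "(\<Sum>p\<in>?T. of_int (g p) * (fst p * snd p)) \<in> B"
    proof -
      have h: "\<And>S. finite S \<Longrightarrow> {p. g p \<noteq> 0} \<subseteq> S \<Longrightarrow> (\<Sum>p\<in>S. of_int (g p) * (fst p * snd p)) \<in> B"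
        using plus.IH(2) by blast
      show ?thesis by (rule h[OF fT]) auto
    qed
    ultimately show "(\<Sum>p\<in>S. of_int (f p + g p) * (fst p * snd p)) \<in> B"
      using Badd by simp
  qed
next
  case (neg f)
  show ?case
  proof (intro conjI allI impI)
    show "finite {p. - f p \<noteq> 0}" using neg.IH by simp
    fix S :: "('a \<times> 'a) set" assume S: "finite S" "{p. - f p \<noteq> 0} \<subseteq> S"
    have "(\<Sum>p\<in>S. of_int (- f p) * (fst p * snd p)) = - (\<Sum>p\<in>S. of_int (f p) * (fst p * snd p))"
      by (simp add: sum_negf)
    then show "(\<Sum>p\<in>S. of_int (- f p) * (fst p * snd p)) \<in> B"
      using neg.IH S Bneg by auto
  qed
qed



lemma sf_case:
  assumes NJ: "NJ_symmetric TYPE('a::ring_1)" and SF: "left_SF TYPE('a)"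
    and bb: "(b::'a) * b \<in> jacobson"
  shows "b \<in> jacobson"
proof (rule J_intro)
  fix M :: "'a set" assume Mm: "maximal_left_ideal M"
  have L: "left_ideal M" and M1: "1 \<notin> M" using max_li[OF Mm] by auto
  note Madd = li_closed(2)[OF L] and Mneg = li_closed(3)[OF L]
    and Mmul = li_closed(4)[OF L] and Msub = li_closed(5)[OF L] and M0 = li_closed(1)[OF L]
  show "b \<in> M"
  proof (rule ccontr)
    assume bM: "b \<notin> M"
    define \<rho> where "\<rho> = (\<lambda>x::'a. SOME y. y - x \<in> M)"
    have r1: "\<rho> x - x \<in> M" for x
    proof -
      have "x - x \<in> M" using M0 by simp
      then show ?thesis unfolding \<rho>_def by (rule someI)
    qed
    have r2: "\<rho> x = \<rho> y" if h: "x - y \<in> M" for x y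
    proof -
      have "(\<lambda>z. z - x \<in> M) = (\<lambda>z. z - y \<in> M)"
      proof (rule ext, rule iffI)
        fix z assume "z - x \<in> M"
        then have "(z - x) + (x - y) \<in> M" using Madd h by blast
        moreover have "(z - x) + (x - y) = z - y" by simp
        ultimately show "z - y \<in> M" by simp
      next
        fix z assume "z - y \<in> M"
        then have "(z - y) - (x - y) \<in> M" using Msub h by blast
        moreover have "(z - y) - (x - y) = z - x" by simp
        ultimately show "z - x \<in> M" by simp
      qed
      then show ?thesis unfolding \<rho>_def by simp
    qed
    have r4: "x - y \<in> M" if h: "\<rho> x = \<rho> y" for x y
    proof -
      have "(\<rho> y - y) - (\<rho> x - x) \<in> M" using Msub r1 by blast
      moreover have "(\<rho> y - y) - (\<rho> x - x) = x - y" using h by simp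
      ultimately show ?thesis by simp
    qed
    have r3: "\<rho> (\<rho> x) = \<rho> x" for x using r2 r1 by blast
    define C where "C = range \<rho>"
    define add where "add = (\<lambda>u v. \<rho> (u + v))"
    define z where "z = \<rho> 0"
    define sm where "sm = (\<lambda>r u. \<rho> (r * u))"
    have fixC: "\<rho> x = x" if "x \<in> C" for x using that r3 unfolding C_def by auto
    have inC: "\<rho> x \<in> C" for x unfolding C_def by simp
    have lm: "left_module C add z sm"
      unfolding left_module_def
    proof (intro conjI ballI allI)
      show "z \<in> C" unfolding z_def by (rule inC)
      show "add x y \<in> C" for x y unfolding add_def by (rule inC)
      show "sm r x \<in> C" for r x unfolding sm_def by (rule inC)
      show "add (add x y) w = add x (add y w)" for x y w
      proof -
        have "(\<rho> (x + y) - (x + y)) - (\<rho> (y + w) - (y + w)) \<in> M" using Msub r1 by blast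
        moreover have "(\<rho> (x + y) - (x + y)) - (\<rho> (y + w) - (y + w)) = (\<rho> (x + y) + w) - (x + \<rho> (y + w))"
          by (simp add: algebra_simps)
        ultimately show ?thesis unfolding add_def using r2 by simp
      qed
      show "add x y = add y x" for x y unfolding add_def by (simp add: add.commute)
      show "add z x = x" if "x \<in> C" for x
      proof -
        have "(\<rho> 0 + x) - x \<in> M" using r1[of 0] by simp
        then have "\<rho> (\<rho> 0 + x) = \<rho> x" by (rule r2)
        then show ?thesis unfolding add_def z_def using fixC[OF that] by simp
      qed
      show "\<exists>y\<in>C. add x y = z" for x
      proof (rule bexI[of _ "\<rho> (- x)"])
        have "(x + \<rho> (- x)) - 0 \<in> M" using r1[of "- x"] by (simp add: add.commute)
        then show "add x (\<rho> (- x)) = z" unfolding add_def z_def by (rule r2)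
      qed (rule inC)
      show "sm r (add x y) = add (sm r x) (sm r y)" for r x y
      proof -
        have "r * (\<rho> (x + y) - (x + y)) - (\<rho> (r * x) - r * x) - (\<rho> (r * y) - r * y) \<in> M"
          using Msub Mmul r1 by blast
        moreover have "r * (\<rho> (x + y) - (x + y)) - (\<rho> (r * x) - r * x) - (\<rho> (r * y) - r * y)
            = r * \<rho> (x + y) - (\<rho> (r * x) + \<rho> (r * y))"
          by (simp add: algebra_simps)
        ultimately show ?thesis unfolding add_def sm_def using r2 by simp
      qed
      show "sm (r + s) x = add (sm r x) (sm s x)" for r s x
      proof -
        have "- (\<rho> (r * x) - r * x) - (\<rho> (s * x) - s * x) \<in> M"
          using Msub Mneg r1 by blast
        moreover have "- (\<rho> (r * x) - r * x) - (\<rho> (s * x) - s * x) = (r + s) * x - (\<rho> (r * x) + \<rho> (s * x))"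
          by (simp add: algebra_simps)
        ultimately have "(r + s) * x - (\<rho> (r * x) + \<rho> (s * x)) \<in> M" by (simp only:)
        then show ?thesis unfolding add_def sm_def by (rule r2)
      qed
      show "sm (r * s) x = sm r (sm s x)" for r s x
      proof -
        have "- (r * (\<rho> (s * x) - s * x)) \<in> M" using Mneg Mmul r1 by blast
        moreover have "- (r * (\<rho> (s * x) - s * x)) = r * s * x - r * \<rho> (s * x)"
          by (simp add: algebra_simps)
        ultimately show ?thesis unfolding sm_def using r2 by simp
      qed
      show "sm 1 x = x" if "x \<in> C" for x unfolding sm_def using fixC[OF that] by simp
    qed
    have simple: "simple_left_module C add z sm"
      unfolding simple_left_module_def
    proof (intro conjI allI impI)
      show "left_module C add z sm" by (fact lm)
      show "C \<noteq> {z}"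
      proof
        assume "C = {z}"
        then have "\<rho> 1 = \<rho> 0" using inC[of 1] unfolding z_def by auto
        then have "1 - 0 \<in> M" by (rule r4)
        then show False using M1 by simp
      qed
      fix N assume sub: "submodule N C add z sm"
      have NC: "N \<subseteq> C" and zN: "z \<in> N" and smN: "\<And>r x. x \<in> N \<Longrightarrow> sm r x \<in> N"
        using sub unfolding submodule_def by auto
      show "N = {z} \<or> N = C"
      proof (cases "N = {z}")
        case True then show ?thesis by simp
      next
        case False
        then obtain n where nN: "n \<in> N" and nz: "n \<noteq> z" using zN by auto
        have nfix: "\<rho> n = n" using fixC NC nN by blast
        have "n \<notin> M"
        proof
          assume "n \<in> M"
          then have "n - 0 \<in> M" by simp
          then have "\<rho> n = \<rho> 0" by (rule r2)
          then show False using nz nfix unfolding z_def by simp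
        qed
        then obtain m0 s where m0: "m0 \<in> M" "1 = m0 + s * n" using gen_ideal[OF Mm] by blast
        have "C \<subseteq> N"
        proof
          fix c assume cC: "c \<in> C"
          have "c = c * m0 + (c * s) * n" using m0(2) by (metis distrib_left mult.assoc mult_1_right)
          then have "c - (c * s) * n \<in> M" using Mmul[OF m0(1)] by (metis add_diff_cancel_right')
          then have "\<rho> c = \<rho> ((c * s) * n)" by (rule r2)
          then have "c = sm (c * s) n" unfolding sm_def using fixC[OF cC] by simp
          then show "c \<in> N" using smN[OF nN, of "c * s"] by metis
        qed
        then show ?thesis using NC by blast
      qed
    qed
    have flat: "flat_left_module C add z sm" using SF simple unfolding left_SF_def by blast
    define I where "I = range (\<lambda>r. b * r)"
    define xs where "xs = [(b, \<rho> b)]"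
    have rI: "right_ideal I" unfolding right_ideal_def I_def
    proof (intro conjI ballI allI)
      show "0 \<in> range ((*) b)" by (rule range_eqI[where x=0]) simp
    next
      fix x y assume "x \<in> range ((*) b)" "y \<in> range ((*) b)"
      then obtain r1 r2 where "x = b * r1" "y = b * r2" by auto
      then show "x + y \<in> range ((*) b)" by (intro range_eqI[where x="r1 + r2"]) (simp add: distrib_left)
    next
      fix x assume "x \<in> range ((*) b)"
      then obtain r1 where "x = b * r1" by auto
      then show "- x \<in> range ((*) b)" by (intro range_eqI[where x="- r1"]) simp
    next
      fix t x assume "x \<in> range ((*) b)"
      then obtain r1 where "x = b * r1" by auto
      then show "x * t \<in> range ((*) b)" by (intro range_eqI[where x="r1 * t"]) (simp add: mult.assoc)
    qed
    have xsI: "set xs \<subseteq> I \<times> C" unfolding xs_def I_def using inC[of b]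
      by (auto intro: range_eqI[where x=1])
    have bbM: "b * b \<in> M" using bb J_sub[OF Mm] by blast
    have fold: "foldr (\<lambda>(i, m) acc. add (sm i m) acc) xs z = z"
    proof -
      have "(\<rho> (b * \<rho> b) - b * \<rho> b) + (\<rho> 0 - 0) + b * (\<rho> b - b) + b * b \<in> M"
        by (rule Madd[OF Madd[OF Madd[OF r1 r1] Mmul[OF r1]] bbM])
      moreover have "(\<rho> (b * \<rho> b) - b * \<rho> b) + (\<rho> 0 - 0) + b * (\<rho> b - b) + b * b
          = (\<rho> (b * \<rho> b) + \<rho> 0) - 0" by (simp add: algebra_simps)
      ultimately have "(\<rho> (b * \<rho> b) + \<rho> 0) - 0 \<in> M" by (simp only:)
      then have "\<rho> (\<rho> (b * \<rho> b) + \<rho> 0) = \<rho> 0" by (rule r2)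
      then show ?thesis unfolding xs_def add_def sm_def z_def by simp
    qed
    have tr: "(\<lambda>p. int (count_list xs p)) \<in> tensor_rel I C add sm"
      using flat rI xsI fold unfolding flat_left_module_def by blast
    define B where "B = {b * m | m. m \<in> M}"
    have B0: "0 \<in> B" unfolding B_def using M0 by (auto intro!: exI[where x=0])
    have Badd: "x + y \<in> B" if xB: "x \<in> B" and yB: "y \<in> B" for x y
    proof -
      obtain m1 where "x = b * m1" "m1 \<in> M" using xB unfolding B_def by blast
      moreover obtain m2 where "y = b * m2" "m2 \<in> M" using yB unfolding B_def by blast
      ultimately
      have "x + y = b * (m1 + m2)" "m1 + m2 \<in> M" using Madd by (auto simp: distrib_left)
      then show ?thesis unfolding B_def by blast
    qed
    have Bneg: "- x \<in> B" if xB: "x \<in> B" for x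
    proof -
      obtain m1 where "x = b * m1" "m1 \<in> M" using xB unfolding B_def by blast
      then have "- x = b * (- m1)" "- m1 \<in> M" using Mneg by auto
      then show ?thesis unfolding B_def by blast
    qed
    have hr: "i * add m m' - i * m - i * m' \<in> B" if iI: "i \<in> I" for i m m'
    proof -
      obtain r0 where i: "i = b * r0" using iI unfolding I_def by auto
      have "r0 * (\<rho> (m + m') - (m + m')) \<in> M" using Mmul r1 by blast
      moreover have "i * add m m' - i * m - i * m' = b * (r0 * (\<rho> (m + m') - (m + m')))"
        unfolding i add_def by (simp add: algebra_simps)
      ultimately show ?thesis unfolding B_def by blast
    qed
    have hb: "(i * r) * m - i * sm r m \<in> B" if iI: "i \<in> I" for i m r
    proof -
      obtain r0 where i: "i = b * r0" using iI unfolding I_def by auto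
      have "r0 * (- (\<rho> (r * m) - r * m)) \<in> M" using Mmul Mneg r1 by blast
      moreover have "(i * r) * m - i * sm r m = b * (r0 * (- (\<rho> (r * m) - r * m)))"
        unfolding i sm_def by (simp add: algebra_simps)
      ultimately show ?thesis unfolding B_def by blast
    qed
    have inv: "\<forall>S. finite S \<longrightarrow> {p. int (count_list xs p) \<noteq> 0} \<subseteq> S \<longrightarrow>
           (\<Sum>p\<in>S. of_int (int (count_list xs p)) * (fst p * snd p)) \<in> B"
      using tensor_inv[OF tr B0 Badd Bneg hr hb] by blast
    have "{p. int (count_list xs p) \<noteq> 0} \<subseteq> {(b, \<rho> b)}" unfolding xs_def by auto
    then have "(\<Sum>p\<in>{(b, \<rho> b)}. of_int (int (count_list xs p)) * (fst p * snd p)) \<in> B"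
      using inv by blast
    then have "b * \<rho> b \<in> B" unfolding xs_def by simp
    then obtain m1 where m1: "b * \<rho> b = b * m1" "m1 \<in> M" unfolding B_def by auto
    define m where "m = m1 - (\<rho> b - b)"
    have mM: "m \<in> M" unfolding m_def using Msub m1(2) r1 by blast
    have bbm: "b * b = b * m" unfolding m_def using m1(1) by (simp add: algebra_simps)
    define y where "y = b - m"
    have yM: "y \<notin> M"
    proof
      assume "y \<in> M"
      then have "y + m \<in> M" using Madd mM by blast
      then show False using bM unfolding y_def by simp
    qed
    obtain m2 s where m2: "m2 \<in> M" "1 = m2 + s * y" using gen_ideal[OF Mm yM] by blast
    have "s * b * y = 0" unfolding y_def using bbm by (simp add: algebra_simps mult.assoc)
    then have "s * b * y \<in> nilpotents" unfolding nilpotents_def by (intro CollectI exI[where x=1]) simp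
    then have "b * s * y \<in> jacobson" using NJ unfolding NJ_symmetric_def by blast
    then have "b * s * y \<in> M" using J_sub[OF Mm] by blast
    moreover have "b * m2 \<in> M" using Mmul[OF m2(1)] .
    ultimately have "b * m2 + b * s * y \<in> M" using Madd by blast
    moreover have "b * m2 + b * s * y = b" using m2(2) by (metis distrib_left mult.assoc mult_1_right)
    ultimately show False using bM by simp
  qed
qed

theorem theorem2p16:
  assumes "NJ_symmetric TYPE('a::ring_1)"
    and "semiperiodic TYPE('a) \<or> left_SF TYPE('a)"
  shows "quotient_jacobson_reduced TYPE('a)"
proof (rule reduce)
  fix b :: 'a assume "b * b \<in> jacobson"
  then show "b \<in> jacobson" using assms semi_case sf_case by blast
qed

end
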